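(* Let $b$ be measurable with $\mathbf b:=\sup_{x,\eta}b(x,\eta)<\infty$ and $\sup_{\eta\in\Gamma_G}|b(x,\eta\cup\{y\})-b(x,\eta)|\le MG(x-y)$ for some $M>0$ and all $x,y$, and let $(\eta_t)_{t\ge0}$ be the unique solution of ( * ). Suppose there is $C_0>0$ with $\mathbb E|\eta_0\cap B|\le C_0\,\mathrm{vol}(B)$ for all bounded Borel $B\subset\mathbb R^d$. Then there exists $C>0$ (one may take $C=\max\{\mathbf b,C_0\}$) such that $\mathbb E|\eta_t\cap B|\le C\,\mathrm{vol}(B)$ for all $t>0$ and all bounded Borel $B$.
   Context: Fix $d\in\mathbb N$ and $\varepsilon>0$, and let $G(x)=(1+|x|)^{-d-\varepsilon}$, $x\in\mathbb R^d$. $\Gamma$ is the set of locally finite subsets $\gamma\subset\mathbb R^d$ (i.e. $|\gamma\cap B|<\infty$ for each bounded Borel $B$), identified with counting measures; $\Gamma_G=\{\gamma\in\Gamma:\langle G,\gamma\rangle:=\sum_{x\in\gamma}G(x)<\infty\}$, equipped with the sequential topology in which $\gamma_n\to\gamma$ iff $\langle f,\gamma_n\rangle\to\langle f,\gamma\rangle$ for all bounded continuous $f$ with $|f|\le M_fG$ for some $M_f$, and the corresponding Borel $\sigma$-algebra. For a measurable $b:\mathbb R^d\times\Gamma_G\to[0,\infty)$, a process with unit death rate and birth rate $b$ is defined as follows. Let $\tilde N$ be a Poisson point process on $\mathbb R_+\times\mathbb R^d\times\mathbb R_+^2$ with mean measure $ds\,dx\,du\,e^{-r}dr$; $\tilde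 N$ is compatible with a filtration $(\mathcal F_t)$ if for every measurable $A\subset\mathbb R^d\times\mathbb R_+^2$, $\tilde N([0,t]\times A)$ is $\mathcal F_t$-measurable and $\tilde N((t,s]\times A)$ is independent of $\mathcal F_t$ for $0<t<s$. Let $\eta_0$ be a $\Gamma_G$-valued $\mathcal F_0$-measurable random variable independent of $\tilde N$, and let $\tilde\eta_0$ be the point process on $\mathbb R^d\times\mathbb R_+$ obtained by attaching to each point of $\eta_0$ an independent unit exponential random variable (independent of $\eta_0$ and $\tilde N$). A solution is a process $(\eta_t)_{t\ge0}$ with sample paths in the Skorokhod space $D_{\Gamma_G}[0,\infty)$, adapted to a filtration with which $\tilde N$ is compatible, such that for every bounded Borel $B\subset\mathbb R^d$ and $t\ge0$, almost surely $$( * )\quad \eta_t(B)=\int_{(0,t]\times B\times\mathbb R_+^2}\mathbf 1_{[0,b(x,\eta_{s-})]}(u)\,\mathbf 1\{r>t-s\}\,\tilde N(ds,dx,du,dr)+\int_{B\times\mathbb R_+}\mathbf 1\{r>t\}\,\tilde\eta_0(dx,dr),$$ where $\eta_t(B)=|\eta_t\cap B|$. $\mathrm{vol}$ is Lebesgue measure. *)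

theory Defs
  imports "HOL-Probability.Probability"
begin

text \<open>Points of R^d are modelled as elements of real^'d (d = CARD('d)).
 A configuration is a set of points; G depends on the fixed parameter eps > 0.\<close>

definition G :: "real \<Rightarrow> real^'d \<Rightarrow> real" where
  "G eps x = (1 + norm x) powr (- (real CARD('d) + eps))"

definition locally_finite_conf :: "(real^'d) set \<Rightarrow> bool" where
  "locally_finite_conf \<gamma> \<longleftrightarrow> (\<forall>B. bounded B \<longrightarrow> finite (\<gamma> \<inter> B))"

definition GammaG :: "real \<Rightarrow> (real^'d) set set" where
  "GammaG eps = {\<gamma>. locally_finite_conf \<gamma> \<and> (G eps) summable_on \<gamma>}"

definition pairing :: "(real^'d \<Rightarrow> real) \<Rightarrow> (real^'d) set \<Rightarrow> real" where
  "pairing f \<gamma> = (\<Sum>\<^sub>\<infinity>x\<in>\<gamma>. f x)"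

definition test_fun :: "real \<Rightarrow> (real^'d \<Rightarrow> real) \<Rightarrow> bool" where
  "test_fun eps f \<longleftrightarrow> continuous_on UNIV f \<and> bounded (range f) \<and>
     (\<exists>Mf. \<forall>x. \<bar>f x\<bar> \<le> Mf * G eps x)"

definition Gconv :: "real \<Rightarrow> (nat \<Rightarrow> (real^'d) set) \<Rightarrow> (real^'d) set \<Rightarrow> bool" where
  "Gconv eps \<gamma>s \<gamma> \<longleftrightarrow>
     (\<forall>f. test_fun eps f \<longrightarrow> (\<lambda>n. pairing f (\<gamma>s n)) \<longlonglongrightarrow> pairing f \<gamma>)"

definition G_open :: "real \<Rightarrow> (real^'d) set set \<Rightarrow> bool" where
  "G_open eps U \<longleftrightarrow> U \<subseteq> GammaG eps \<and>
     (\<forall>\<gamma>\<in>U. \<forall>\<gamma>s. (\<forall>n. \<gamma>s n \<in> GammaG eps) \<longrightarrow> Gconv eps \<gamma>s \<gamma> \<longrightarrow>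
        eventually (\<lambda>n. \<gamma>s n \<in> U) sequentially)"

definition GBorel :: "real \<Rightarrow> (real^'d) set measure" where
  "GBorel eps = sigma (GammaG eps) {U. G_open eps U}"

definition cadlag :: "real \<Rightarrow> (real \<Rightarrow> (real^'d) set) \<Rightarrow> bool" where
  "cadlag eps f \<longleftrightarrow>
     (\<forall>t\<ge>0. f t \<in> GammaG eps) \<and>
     (\<forall>t\<ge>0. \<forall>ss. (\<forall>n. ss n \<ge> t) \<longrightarrow> ss \<longlonglongrightarrow> t \<longrightarrow> Gconv eps (\<lambda>n. f (ss n)) (f t)) \<and>
     (\<forall>t>0. \<exists>l\<in>GammaG eps. \<forall>ss. (\<forall>n. 0 \<le> ss n \<and> ss n < t) \<longrightarrow> ss \<longlonglongrightarrow> t \<longrightarrow>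
         Gconv eps (\<lambda>n. f (ss n)) l)"

definition left_lim :: "real \<Rightarrow> (real \<Rightarrow> (real^'d) set) \<Rightarrow> real \<Rightarrow> (real^'d) set" where
  "left_lim eps f t = (THE l. l \<in> GammaG eps \<and>
      (\<forall>ss. (\<forall>n. 0 \<le> ss n \<and> ss n < t) \<longrightarrow> ss \<longlonglongrightarrow> t \<longrightarrow> Gconv eps (\<lambda>n. f (ss n)) l))"

definition pcount :: "'b set \<Rightarrow> 'b set \<Rightarrow> enat" where
  "pcount S A = (if finite (S \<inter> A) then enat (card (S \<inter> A)) else \<infinity>)"

definition mean_measure :: "(real \<times> (real^'d) \<times> real \<times> real) measure" where
  "mean_measure = density (lborel \<Otimes>\<^sub>M (lborel \<Otimes>\<^sub>M (lborel \<Otimes>\<^sub>M lborel)))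
     (\<lambda>(s,x,u,r). ennreal (indicator ({0..} \<times> UNIV \<times> {0..} \<times> {0..}) (s,x,u,r) * exp (- r)))"

definition poisson_pp :: "'a measure \<Rightarrow> 'b measure \<Rightarrow> ('a \<Rightarrow> 'b set) \<Rightarrow> bool" where
  "poisson_pp M \<mu> N \<longleftrightarrow> prob_space M \<and>
    (\<forall>A. A \<in> sets \<mu> \<longrightarrow> emeasure \<mu> A < \<infinity> \<longrightarrow>
        (\<lambda>\<omega>. card (N \<omega> \<inter> A)) \<in> measurable M (count_space UNIV) \<and>
        (AE \<omega> in M. finite (N \<omega> \<inter> A)) \<and>
        (\<forall>k. measure M {\<omega>\<in>space M. card (N \<omega> \<inter> A) = k} =
              measure \<mu> A ^ k / fact k * exp (- measure \<mu> A))) \<and>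
    (\<forall>(I::nat set) A. finite I \<longrightarrow> (\<forall>i\<in>I. A i \<in> sets \<mu> \<and> emeasure \<mu> (A i) < \<infinity>) \<longrightarrow>
        disjoint_family_on A I \<longrightarrow>
        prob_space.indep_vars M (\<lambda>_. count_space UNIV) (\<lambda>i \<omega>. card (N \<omega> \<inter> A i)) I)"

definition is_filtration :: "'a measure \<Rightarrow> (real \<Rightarrow> 'a measure) \<Rightarrow> bool" where
  "is_filtration M F \<longleftrightarrow> (\<forall>t\<ge>0. subalgebra M (F t)) \<and>
     (\<forall>s t. 0 \<le> s \<longrightarrow> s \<le> t \<longrightarrow> sets (F s) \<subseteq> sets (F t))"

definition indep_of :: "'a measure \<Rightarrow> 'a measure \<Rightarrow> ('a \<Rightarrow> 'c) \<Rightarrow> bool" where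
  "indep_of M F X \<longleftrightarrow> X \<in> measurable M (count_space UNIV) \<and>
     (\<forall>E\<in>sets F. \<forall>Y. measure M (E \<inter> {\<omega>\<in>space M. X \<omega> \<in> Y}) =
                      measure M E * measure M {\<omega>\<in>space M. X \<omega> \<in> Y})"

definition compatible :: "'a measure \<Rightarrow> (real \<Rightarrow> 'a measure) \<Rightarrow>
    ('a \<Rightarrow> (real \<times> (real^'d) \<times> real \<times> real) set) \<Rightarrow> bool" where
  "compatible M F N \<longleftrightarrow>
    (\<forall>A. A \<in> sets (borel :: ((real^'d) \<times> real \<times> real) measure) \<longrightarrow> A \<subseteq> UNIV \<times> {0..} \<times> {0..} \<longrightarrow>
      (\<forall>t\<ge>0. (\<lambda>\<omega>. pcount (N \<omega>) ({0..t} \<times> A)) \<in> measurable (F t) (count_space UNIV)) \<and>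
      (\<forall>t s. 0 < t \<longrightarrow> t < s \<longrightarrow> indep_of M (F t) (\<lambda>\<omega>. pcount (N \<omega>) ({t<..s} \<times> A))))"

definition sigma_eta0 :: "real \<Rightarrow> 'a measure \<Rightarrow> ('a \<Rightarrow> (real^'d) set) \<Rightarrow> 'a set set" where
  "sigma_eta0 eps M \<eta>0 = {\<eta>0 -` S \<inter> space M | S. S \<in> sets (GBorel eps)}"

definition sigma_N :: "'a measure \<Rightarrow> ('a \<Rightarrow> (real \<times> (real^'d) \<times> real \<times> real) set) \<Rightarrow> 'a set set" where
  "sigma_N M N = sets (sigma (space M)
     {{\<omega>\<in>space M. pcount (N \<omega>) A = k} | A k. A \<in> sets (borel :: (real \<times> (real^'d) \<times> real \<times> real) measure)})"

text \<open>eta0t is obtained from eta0 by attaching to each point an independent unit exponential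
 mark, independent of eta0 and N: each point of eta0 carries exactly one mark, and conditionally on
 (eta0, N) the marks are i.i.d. Exp(1) (expressed via the conditional Laplace functional,
 tested on functions supported in B x R with B bounded).\<close>
definition exp_marking :: "real \<Rightarrow> 'a measure \<Rightarrow> ('a \<Rightarrow> (real^'d) set) \<Rightarrow>
    ('a \<Rightarrow> (real \<times> (real^'d) \<times> real \<times> real) set) \<Rightarrow> ('a \<Rightarrow> ((real^'d) \<times> real) set) \<Rightarrow> bool" where
  "exp_marking eps M \<eta>0 N \<eta>0t \<longleftrightarrow>
    (\<forall>\<omega>\<in>space M. bij_betw fst (\<eta>0t \<omega>) (\<eta>0 \<omega>)) \<and>
    (\<forall>B f S T. B \<in> sets borel \<and> bounded B \<and> f \<in> borel_measurable borel \<and> (\<forall>p. 0 \<le> f p) \<and>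
        (\<forall>x r. x \<notin> B \<longrightarrow> f (x, r) = 0) \<and> S \<in> sigma_eta0 eps M \<eta>0 \<and> T \<in> sigma_N M N \<longrightarrow>
      (\<lambda>\<omega>. exp (- (\<Sum>p\<in>{p\<in>\<eta>0t \<omega>. fst p \<in> B}. f p))) \<in> borel_measurable M \<and>
      (\<lambda>\<omega>. (\<Prod>x\<in>\<eta>0 \<omega> \<inter> B. LINT r:{0..}|lborel. exp (- f (x, r)) * exp (- r))) \<in> borel_measurable M \<and>
      (\<integral>\<omega>. indicator (S \<inter> T) \<omega> * exp (- (\<Sum>p\<in>{p\<in>\<eta>0t \<omega>. fst p \<in> B}. f p)) \<partial>M) =
      (\<integral>\<omega>. indicator (S \<inter> T) \<omega> *
            (\<Prod>x\<in>\<eta>0 \<omega> \<inter> B. LINT r:{0..}|lborel. exp (- f (x, r)) * exp (- r)) \<partial>M))"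

definition is_solution :: "real \<Rightarrow> 'a measure \<Rightarrow> (real \<Rightarrow> 'a measure) \<Rightarrow>
    ('a \<Rightarrow> (real \<times> (real^'d) \<times> real \<times> real) set) \<Rightarrow> ('a \<Rightarrow> ((real^'d) \<times> real) set) \<Rightarrow>
    (real^'d \<Rightarrow> (real^'d) set \<Rightarrow> real) \<Rightarrow> (real \<Rightarrow> 'a \<Rightarrow> (real^'d) set) \<Rightarrow> bool" where
  "is_solution eps M F N \<eta>0t b \<eta> \<longleftrightarrow>
    (\<forall>t\<ge>0. \<eta> t \<in> measurable (F t) (GBorel eps)) \<and>
    (\<forall>\<omega>\<in>space M. cadlag eps (\<lambda>t. \<eta> t \<omega>)) \<and>
    (\<forall>B t. B \<in> sets borel \<and> bounded B \<and> 0 \<le> t \<longrightarrow>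
      (AE \<omega> in M. pcount (\<eta> t \<omega>) B =
          pcount (N \<omega>) {(s, x, u, r). 0 < s \<and> s \<le> t \<and> x \<in> B \<and>
                0 \<le> u \<and> u \<le> b x (left_lim eps (\<lambda>s'. \<eta> s' \<omega>) s) \<and> t - s < r}
        + pcount (\<eta>0t \<omega>) {(x, r). x \<in> B \<and> t < r}))"

end

theory Submission
  imports Defs
begin


lemma test_fun_bump:
  fixes y :: "real^'d"
  assumes "0 < eps" "0 < \<delta>" "\<delta> \<le> 1"
  shows "test_fun eps (\<lambda>z. max 0 (1 - dist z y / \<delta>))"
proof -
  let ?D = "real CARD('d) + eps"
  let ?Mf = "(2 + norm y) powr ?D"
  have "\<bar>max 0 (1 - dist z y / \<delta>)\<bar> \<le> ?Mf * G eps z" for z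
  proof (cases "dist z y < \<delta>")
    case True
    then have "norm z \<le> norm y + 1" using assms
      by (metis add_le_cancel_left dist_commute dist_norm norm_triangle_sub order.trans order_less_imp_le) 
    then have "(2 + norm y) powr (- ?D) \<le> (1 + norm z) powr (- ?D)"
      using assms by (intro powr_mono2') (auto intro: add_pos_nonneg)
    then have "?Mf * (2 + norm y) powr (- ?D) \<le> ?Mf * G eps z"
      unfolding G_def by (intro mult_left_mono) auto
    moreover have "?Mf * (2 + norm y) powr (- ?D) = 1"
    proof -
      have "2 + norm y \<noteq> 0" by (metis add_pos_nonneg norm_ge_zero zero_less_numeral less_irrefl)
      then show ?thesis by (simp add: powr_add[symmetric])
    qed
    moreover have "\<bar>max 0 (1 - dist z y / \<delta>)\<bar> \<le> 1" using assms by auto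
    ultimately show ?thesis by linarith
  next
    case False
    then have "max 0 (1 - dist z y / \<delta>) = 0" using assms by (auto simp: field_simps)
    moreover have "0 \<le> ?Mf * G eps z" unfolding G_def by simp
    ultimately show ?thesis by simp
  qed
  moreover have "continuous_on UNIV (\<lambda>z. max 0 (1 - dist z y / \<delta>))"
    using assms by (intro continuous_intros) auto
  moreover have "bounded (range (\<lambda>z. max 0 (1 - dist z y / \<delta>)))"
    unfolding bounded_iff using assms by (intro exI[of _ 1]) auto
  ultimately show ?thesis unfolding test_fun_def by blast
qed

lemma GammaG_sep_one:
  fixes l l' :: "(real^'d) set"
  assumes eps: "0 < eps" and l: "l \<in> GammaG eps" and l': "l' \<in> GammaG eps"
    and eq: "\<And>f. test_fun eps f \<Longrightarrow> pairing f l = pairing f l'"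
    and y: "y \<in> l"
  shows "y \<in> l'"
proof (rule ccontr)
  assume ny: "y \<notin> l'"
  let ?S = "(l \<union> l') \<inter> cball y 1"
  have "finite ?S" using l l' unfolding GammaG_def locally_finite_conf_def
    by (simp add: Int_Un_distrib2)
  from finite_set_avoid[OF this, of y] obtain d where d: "d > 0" "\<forall>x\<in>?S. x \<noteq> y \<longrightarrow> d \<le> dist y x"
    by blast
  define \<delta> where "\<delta> = min d 1"
  have dpos: "0 < \<delta>" "\<delta> \<le> 1" using d by (auto simp: \<delta>_def)
  have far: "\<delta> \<le> dist z y" if "z \<in> l \<union> l'" "z \<noteq> y" for z
  proof (cases "z \<in> cball y 1")
    case True then show ?thesis using d that by (auto simp: \<delta>_def dist_commute)
  next
    case False then show ?thesis by (auto simp: \<delta>_def dist_commute)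
  qed
  define \<phi> where "\<phi> = (\<lambda>z::real^'d. max 0 (1 - dist z y / \<delta>))"
  have tf: "test_fun eps \<phi>" unfolding \<phi>_def by (rule test_fun_bump[OF eps dpos])
  have z0: "\<phi> z = 0" if "z \<in> l \<union> l'" "z \<noteq> y" for z
    using far[OF that] dpos by (auto simp: \<phi>_def field_simps)
  have "pairing \<phi> l = infsum \<phi> {y}"
    unfolding pairing_def using y z0 by (intro infsum_cong_neutral) auto
  also have "\<dots> = 1" by (simp add: \<phi>_def)
  finally have 1: "pairing \<phi> l = 1" .
  have "pairing \<phi> l' = 0" unfolding pairing_def using z0 ny by (intro infsum_0) auto
  with 1 eq[OF tf] show False by simp
qed

lemma GammaG_sep:
  fixes l l' :: "(real^'d) set"
  assumes eps: "0 < eps" and l: "l \<in> GammaG eps" and l': "l' \<in> GammaG eps"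
    and eq: "\<And>f. test_fun eps f \<Longrightarrow> pairing f l = pairing f l'"
  shows "l = l'"
  using GammaG_sep_one[OF eps l l' eq] GammaG_sep_one[OF eps l' l eq[symmetric]] by blast

lemma left_lim_in:
  fixes f :: "real \<Rightarrow> (real^'d) set"
  assumes eps: "0 < eps" and c: "cadlag eps f" and s: "0 < s"
  shows "left_lim eps f s \<in> GammaG eps"
proof -
  from c s obtain l where l: "l \<in> GammaG eps" and lim: "\<forall>ss. (\<forall>n. 0 \<le> ss n \<and> ss n < s) \<longrightarrow> ss \<longlonglongrightarrow> s \<longrightarrow>
         Gconv eps (\<lambda>n. f (ss n)) l" unfolding cadlag_def by blast
  define ss where "ss = (\<lambda>n::nat. s - s / real (Suc (Suc n)))"
  have ss1: "\<forall>n. 0 \<le> ss n \<and> ss n < s" using s by (auto simp: ss_def field_simps)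
  have "(\<lambda>n. s / real (Suc (Suc n))) \<longlonglongrightarrow> 0"
  proof -
    have "(\<lambda>n. s / real n) \<longlonglongrightarrow> 0" by (rule lim_const_over_n)
    from LIMSEQ_Suc[OF LIMSEQ_Suc[OF this]] show ?thesis by simp
  qed
  then have ss2: "ss \<longlonglongrightarrow> s" unfolding ss_def using tendsto_diff[OF tendsto_const, of _ 0 sequentially s] by simp
  have uniq: "l' = l" if "l' \<in> GammaG eps" "\<forall>ss. (\<forall>n. 0 \<le> ss n \<and> ss n < s) \<longrightarrow> ss \<longlonglongrightarrow> s \<longrightarrow>
         Gconv eps (\<lambda>n. f (ss n)) l'" for l'
  proof (rule GammaG_sep[OF eps that(1) l])
    fix \<phi> :: "real^'d \<Rightarrow> real" assume "test_fun eps \<phi>"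
    then have "(\<lambda>n. pairing \<phi> (f (ss n))) \<longlonglongrightarrow> pairing \<phi> l'"
         "(\<lambda>n. pairing \<phi> (f (ss n))) \<longlonglongrightarrow> pairing \<phi> l"
      using that(2) lim ss1 ss2 unfolding Gconv_def by blast+
    then show "pairing \<phi> l' = pairing \<phi> l" by (rule LIMSEQ_unique)
  qed
  have "left_lim eps f s = l" unfolding left_lim_def
  proof (rule the_equality)
    show "l \<in> GammaG eps \<and> (\<forall>ss. (\<forall>n. 0 \<le> ss n \<and> ss n < s) \<longrightarrow> ss \<longlonglongrightarrow> s \<longrightarrow> Gconv eps (\<lambda>n. f (ss n)) l)"
      using l lim by blast
  next
    fix l' assume "l' \<in> GammaG eps \<and> (\<forall>ss. (\<forall>n. 0 \<le> ss n \<and> ss n < s) \<longrightarrow> ss \<longlonglongrightarrow> s \<longrightarrow> Gconv eps (\<lambda>n. f (ss n)) l')"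
    then show "l' = l" using uniq by blast
  qed
  with l show ?thesis by simp
qed




lemma exp_tail:
  fixes a :: real assumes a: "0 \<le> a"
  shows "(\<integral>\<^sup>+r. ennreal (indicator {a<..} r * exp (- r)) \<partial>lborel) = ennreal (exp (- a))"
proof -
  have "prob_space (density lborel (exponential_density 1))" by (rule prob_space_exponential_density) simp
  then have "emeasure (density lborel (exponential_density 1)) UNIV = 1"
    using prob_space.emeasure_space_1 by fastforce
  then have tot: "(\<integral>\<^sup>+ x. ennreal (exponential_density 1 x) \<partial>lborel) = 1"
    by (simp add: emeasure_density)
  have low: "(\<integral>\<^sup>+ x. ennreal (exponential_density 1 x) * indicator {..a} x \<partial>lborel) = ennreal (1 - exp (-a))"
    using nn_integral_erlang_density[of 1 0 a] a by (simp add: erlang_CDF_0)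
  have split: "ennreal (exponential_density 1 x) = ennreal (exponential_density 1 x) * indicator {..a} x
      + ennreal (indicator {a<..} x * exp (- x))" for x
    using a by (auto simp: exponential_density_def split: split_indicator)
  have "(1::ennreal) = (\<integral>\<^sup>+ x. ennreal (exponential_density 1 x) * indicator {..a} x \<partial>lborel)
      + (\<integral>\<^sup>+r. ennreal (indicator {a<..} r * exp (- r)) \<partial>lborel)"
    unfolding tot[symmetric] by (subst split) (rule nn_integral_add; simp)
  then have "(\<integral>\<^sup>+r. ennreal (indicator {a<..} r * exp (- r)) \<partial>lborel) = 1 - ennreal (1 - exp (-a))"
    unfolding low by (metis ennreal_add_diff_cancel_left ennreal_neq_top)
  also have "\<dots> = ennreal (exp (-a))"
  proof -
    have "exp (-a) \<le> 1" using a by simp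
    then have "1 - ennreal (1 - exp (-a)) = ennreal (1 - (1 - exp (-a)))"
      using ennreal_minus[of "1 - exp (-a)" 1] by simp
    then show ?thesis by simp
  qed
  finally show ?thesis .
qed

lemma poisson_mean:
  fixes X :: "'a \<Rightarrow> nat"
  assumes P: "prob_space M" and X: "X \<in> measurable M (count_space UNIV)" and m: "0 \<le> m"
    and d: "\<And>k. measure M {\<omega>\<in>space M. X \<omega> = k} = m ^ k / fact k * exp (- m)"
  shows "(\<integral>\<^sup>+\<omega>. ennreal (real (X \<omega>)) \<partial>M) = ennreal m"
proof -
  have ev: "{\<omega>\<in>space M. X \<omega> = k} \<in> sets M" for k using X by measurable
  interpret prob_space M by fact
  have fin: "emeasure M A = ennreal (measure M A)" for A
    by (rule emeasure_eq_measure)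
  have S: "(\<lambda>k. real k * (m ^ k / fact k * exp (- m))) sums (m * exp m * exp (- m))"
  proof -
    have e: "(\<lambda>k. m ^ k / fact k) sums exp m" using exp_converges[of m] by (simp add: divide_inverse mult.commute)
    have "(\<lambda>k. m * (m ^ k / fact k) * exp (- m)) sums (m * exp m * exp (- m))"
      by (intro sums_mult2 sums_mult e)
    moreover have "real (Suc k) * (m ^ Suc k / fact (Suc k) * exp (- m)) = m * (m ^ k / fact k) * exp (- m)" for k
    proof -
      have "fact (Suc k) = real (Suc k) * (fact k :: real)" by (rule fact_Suc)
      moreover have "real (Suc k) > 0" "(fact k :: real) > 0" by auto
      ultimately show ?thesis by (simp del: of_nat_Suc)
    qed
    ultimately have "(\<lambda>k. real (Suc k) * (m ^ Suc k / fact (Suc k) * exp (- m))) sums (m * exp m * exp (- m))"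
      by simp
    then show ?thesis by (subst (asm) sums_Suc_iff) simp
  qed
  have pt: "ennreal (real (X \<omega>)) = (\<Sum>k. ennreal (real k) * indicator {\<omega>\<in>space M. X \<omega> = k} \<omega>)"
    if "\<omega> \<in> space M" for \<omega>
  proof -
    have "(\<lambda>k. ennreal (real k) * indicator {\<omega>\<in>space M. X \<omega> = k} \<omega>) = (\<lambda>k. if k = X \<omega> then ennreal (real (X \<omega>)) else 0)"
      using that by (auto simp: fun_eq_iff)
    then show ?thesis using sums_single[of "X \<omega>" "\<lambda>_. ennreal (real (X \<omega>))"] sums_unique by metis
  qed
  have "(\<integral>\<^sup>+\<omega>. ennreal (real (X \<omega>)) \<partial>M) = (\<integral>\<^sup>+\<omega>. (\<Sum>k. ennreal (real k) * indicator {\<omega>\<in>space M. X \<omega> = k} \<omega>) \<partial>M)"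
    by (rule nn_integral_cong) (use pt in auto)
  also have "\<dots> = (\<Sum>k. \<integral>\<^sup>+\<omega>. ennreal (real k) * indicator {\<omega>\<in>space M. X \<omega> = k} \<omega> \<partial>M)"
    by (rule nn_integral_suminf) (use ev in auto)
  also have "\<dots> = (\<Sum>k. ennreal (real k * (m ^ k / fact k * exp (- m))))"
    by (intro suminf_cong) (simp add: nn_integral_cmult_indicator ev fin d ennreal_mult'[symmetric])
  also have "\<dots> = ennreal (\<Sum>k. real k * (m ^ k / fact k * exp (- m)))"
    by (rule suminf_ennreal2) (use m S in \<open>auto simp: sums_summable\<close>)
  also have "(\<Sum>k. real k * (m ^ k / fact k * exp (- m))) = m"
    using S by (simp add: sums_iff exp_minus field_simps)
  finally show ?thesis .
qed




lemma exp_int_0t: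
  fixes t :: real assumes "0 \<le> t"
  shows "(\<integral>\<^sup>+ s. ennreal (exp s * exp (-t)) * indicator {0..t} s \<partial>lborel) = ennreal (1 - exp (-t))"
proof -
  have "(exp has_integral (exp t - exp 0)) {0..t}"
    by (meson DERIV_exp assms fundamental_theorem_of_calculus has_real_derivative_iff_has_vector_derivative
       has_vector_derivative_at_within)
  then have "((\<lambda>s. exp s * exp (-t)) has_integral ((exp t - exp 0) * exp (-t))) {0..t}"
    by (rule has_integral_mult_left)
  then have "(\<integral>\<^sup>+ s. ennreal (exp s * exp (-t)) * indicator {0..t} s \<partial>lborel) = ennreal ((exp t - exp 0) * exp (-t))"
    by (intro nn_integral_has_integral_lebesgue') auto
  also have "(exp t - exp 0) * exp (-t) = 1 - exp (-t)"
    by (simp add: algebra_simps exp_minus)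
  finally show ?thesis .
qed

lemma sf_lborel3: "sigma_finite_measure (lborel \<Otimes>\<^sub>M (lborel \<Otimes>\<^sub>M (lborel :: real measure)) :: (('d::euclidean_space) \<times> real \<times> real) measure)"
  by (intro sigma_finite_pair_measure lborel.sigma_finite_measure_axioms)

lemma sf_lborel2: "sigma_finite_measure (lborel \<Otimes>\<^sub>M (lborel :: real measure) :: (real \<times> real) measure)"
  by (intro sigma_finite_pair_measure lborel.sigma_finite_measure_axioms)

lemma mean_bound:
  fixes B :: "(real^'d) set" and t bb :: real
  assumes B: "B \<in> sets borel" and t: "0 < t" and bb: "0 \<le> bb"
  defines "A \<equiv> {(s,x,u,r). 0 < s \<and> s \<le> t \<and> x \<in> B \<and> 0 \<le> u \<and> u \<le> bb \<and> t - s < r}"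
  shows "A \<in> sets (mean_measure :: (real \<times> (real^'d) \<times> real \<times> real) measure)"
    and "emeasure (mean_measure :: (real \<times> (real^'d) \<times> real \<times> real) measure) A
          \<le> ennreal (bb * (1 - exp (-t))) * emeasure lborel B"
proof -
  have [measurable]: "B \<in> sets lborel" using B by simp
  have Am: "A \<in> sets (lborel \<Otimes>\<^sub>M (lborel \<Otimes>\<^sub>M (lborel \<Otimes>\<^sub>M lborel)) :: (real \<times> (real^'d) \<times> real \<times> real) measure)"
  proof -
    let ?M = "(lborel \<Otimes>\<^sub>M (lborel \<Otimes>\<^sub>M (lborel \<Otimes>\<^sub>M lborel)) :: (real \<times> (real^'d) \<times> real \<times> real) measure)"
    have "{p \<in> space ?M. 0 < fst p \<and> fst p \<le> t \<and> fst (snd p) \<in> B \<and> 0 \<le> fst (snd (snd p)) \<and> fst (snd (snd p)) \<le> bb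
          \<and> t - fst p < snd (snd (snd p))} \<in> sets ?M"
      by measurable
    moreover have "A = {p \<in> space ?M. 0 < fst p \<and> fst p \<le> t \<and> fst (snd p) \<in> B \<and> 0 \<le> fst (snd (snd p)) \<and> fst (snd (snd p)) \<le> bb
          \<and> t - fst p < snd (snd (snd p))}"
      unfolding A_def space_pair_measure by (auto simp: case_prod_beta)
    ultimately show ?thesis by (simp only:)
  qed
  then show "A \<in> sets (mean_measure :: (real \<times> (real^'d) \<times> real \<times> real) measure)"
    by (simp add: mean_measure_def)
  define g :: "real \<times> (real^'d) \<times> real \<times> real \<Rightarrow> ennreal" where
    "g = (\<lambda>(s,x,u,r). ennreal (indicator ({0..} \<times> UNIV \<times> {0..} \<times> {0..}) (s,x,u,r) * exp (- r)))"
  have gm: "g \<in> borel_measurable (lborel \<Otimes>\<^sub>M (lborel \<Otimes>\<^sub>M (lborel \<Otimes>\<^sub>M lborel)))"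
    unfolding g_def by measurable
  define h :: "real \<times> (real^'d) \<times> real \<times> real \<Rightarrow> ennreal" where
    "h = (\<lambda>(s,x,u,r). indicator {0..t} s * (indicator B x * (indicator {0..bb} u * ennreal (if t - s < r then exp (- r) else 0))))"
  have hm: "h \<in> borel_measurable (lborel \<Otimes>\<^sub>M (lborel \<Otimes>\<^sub>M (lborel \<Otimes>\<^sub>M lborel)))"
    unfolding h_def by measurable
  have "emeasure (mean_measure :: (real \<times> (real^'d) \<times> real \<times> real) measure) A
      = (\<integral>\<^sup>+p. g p * indicator A p \<partial>(lborel \<Otimes>\<^sub>M (lborel \<Otimes>\<^sub>M (lborel \<Otimes>\<^sub>M lborel))))"
    unfolding mean_measure_def g_def[symmetric] using Am gm by (simp add: emeasure_density)
  also have "\<dots> \<le> (\<integral>\<^sup>+p. h p \<partial>(lborel \<Otimes>\<^sub>M (lborel \<Otimes>\<^sub>M (lborel \<Otimes>\<^sub>M lborel))))"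
    by (intro nn_integral_mono) (auto simp: g_def h_def A_def split: split_indicator)
  also have "\<dots> = (\<integral>\<^sup>+s. \<integral>\<^sup>+q. h (s,q) \<partial>(lborel \<Otimes>\<^sub>M (lborel \<Otimes>\<^sub>M lborel)) \<partial>lborel)"
    by (rule sigma_finite_measure.nn_integral_fst[OF sf_lborel3 hm, symmetric])
  also have "\<dots> = (\<integral>\<^sup>+s. ennreal (exp s * exp (-t)) * indicator {0..t} s * (emeasure lborel B * ennreal bb) \<partial>lborel)"
  proof (rule nn_integral_cong)
    fix s :: real
    show "(\<integral>\<^sup>+q. h (s,q) \<partial>(lborel \<Otimes>\<^sub>M (lborel \<Otimes>\<^sub>M lborel))) =
        ennreal (exp s * exp (-t)) * indicator {0..t} s * (emeasure lborel B * ennreal bb)"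
    proof (cases "s \<in> {0..t}")
      case False
      then show ?thesis by (simp add: h_def)
    next
      case True
      have m1: "(\<lambda>(x,u,r). indicator B x * (indicator {0..bb} u * ennreal (if t - s < r then exp (- r) else 0)))
          \<in> borel_measurable (lborel \<Otimes>\<^sub>M (lborel \<Otimes>\<^sub>M (lborel :: real measure)) :: ((real^'d) \<times> real \<times> real) measure)"
        by measurable
      have m2: "(\<lambda>(u,r). (indicator {0..bb} u * ennreal (if t - s < r then exp (- r) else 0)))
          \<in> borel_measurable (lborel \<Otimes>\<^sub>M (lborel :: real measure))"
        by measurable
      have "(\<integral>\<^sup>+q. h (s,q) \<partial>(lborel \<Otimes>\<^sub>M (lborel \<Otimes>\<^sub>M lborel)))
          = (\<integral>\<^sup>+q. (\<lambda>(x,u,r). indicator B x * (indicator {0..bb} u * ennreal (if t - s < r then exp (- r) else 0))) q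
              \<partial>(lborel \<Otimes>\<^sub>M (lborel \<Otimes>\<^sub>M lborel)))"
        using True by (intro nn_integral_cong) (auto simp: h_def)
      also have "\<dots> = (\<integral>\<^sup>+x. \<integral>\<^sup>+ur. indicator B x * (\<lambda>(u,r). (indicator {0..bb} u * ennreal (if t - s < r then exp (- r) else 0))) ur
             \<partial>(lborel \<Otimes>\<^sub>M lborel) \<partial>lborel)"
        by (subst sigma_finite_measure.nn_integral_fst[OF sf_lborel2 m1, symmetric])
           (auto intro!: nn_integral_cong simp: case_prod_beta)
      also have "\<dots> = (\<integral>\<^sup>+x. indicator B x * (\<integral>\<^sup>+ur. (\<lambda>(u,r). (indicator {0..bb} u * ennreal (if t - s < r then exp (- r) else 0))) ur
             \<partial>(lborel \<Otimes>\<^sub>M lborel)) \<partial>lborel)"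
        by (intro nn_integral_cong nn_integral_cmult m2)
      also have "(\<integral>\<^sup>+ur. (\<lambda>(u,r). (indicator {0..bb} u * ennreal (if t - s < r then exp (- r) else 0))) ur
             \<partial>(lborel \<Otimes>\<^sub>M lborel)) = (\<integral>\<^sup>+u. \<integral>\<^sup>+r. indicator {0..bb} u * ennreal (if t - s < r then exp (- r) else 0) \<partial>lborel \<partial>lborel)"
        by (subst lborel.nn_integral_fst[OF m2, symmetric]) simp
      also have "\<dots> = (\<integral>\<^sup>+u. indicator {0..bb} u * ennreal (exp (s - t)) \<partial>lborel)"
      proof (intro nn_integral_cong)
        fix u :: real
        have "(\<integral>\<^sup>+r. indicator {0..bb} u * ennreal (if t - s < r then exp (- r) else 0) \<partial>lborel)
            = indicator {0..bb} u * (\<integral>\<^sup>+r. ennreal (if t - s < r then exp (- r) else 0) \<partial>lborel)"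
          by (rule nn_integral_cmult) measurable
        also have "\<dots> = indicator {0..bb} u * ennreal (exp (s - t))"
        proof -
          have "(\<lambda>r. ennreal (if t - s < r then exp (- r) else 0)) = (\<lambda>r. ennreal (indicator {t-s<..} r * exp (- r)))"
            by (auto simp: fun_eq_iff indicator_def)
          then show ?thesis using True exp_tail[of "t - s"] by simp
        qed
        finally show "(\<integral>\<^sup>+r. indicator {0..bb} u * ennreal (if t - s < r then exp (- r) else 0) \<partial>lborel)
            = indicator {0..bb} u * ennreal (exp (s - t))" .
      qed
      also have "\<dots> = ennreal bb * ennreal (exp (s - t))"
        using bb by (simp add: nn_integral_multc)
      finally have "(\<integral>\<^sup>+q. h (s,q) \<partial>(lborel \<Otimes>\<^sub>M (lborel \<Otimes>\<^sub>M lborel))) =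
          (\<integral>\<^sup>+x. indicator B x * (ennreal bb * ennreal (exp (s - t))) \<partial>lborel)" .
      also have "\<dots> = emeasure lborel B * (ennreal bb * ennreal (exp (s - t)))"
        using B by (simp add: nn_integral_multc nn_integral_indicator)
      finally show ?thesis using True by (simp add: exp_diff exp_minus divide_inverse mult_ac)
    qed
  qed
  also have "\<dots> = (\<integral>\<^sup>+s. ennreal (exp s * exp (-t)) * indicator {0..t} s \<partial>lborel) * (emeasure lborel B * ennreal bb)"
    by (rule nn_integral_multc) measurable
  also have "\<dots> = ennreal (1 - exp (-t)) * (emeasure lborel B * ennreal bb)"
    using t by (simp add: exp_int_0t)
  also have "\<dots> = ennreal (bb * (1 - exp (-t))) * emeasure lborel B"
    using bb t by (simp add: ennreal_mult' mult_ac)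
  finally show "emeasure (mean_measure :: (real \<times> (real^'d) \<times> real \<times> real) measure) A
          \<le> ennreal (bb * (1 - exp (-t))) * emeasure lborel B" .
qed




lemma qval:
  fixes t l :: real assumes t: "0 < t"
  shows "(LINT r:{0..}|lborel. exp (- (l * indicator {t<..} r)) * exp (- r)) = 1 - (1 - exp (- l)) * exp (- t)"
proof -
  have e1: "has_bochner_integral lborel (\<lambda>r::real. indicator {0..} r * exp (- r)) 1"
  proof (rule has_bochner_integral_nn_integral)
    have "prob_space (density lborel (exponential_density 1))" by (rule prob_space_exponential_density) simp
    then have "emeasure (density lborel (exponential_density 1)) UNIV = 1"
      using prob_space.emeasure_space_1 by fastforce
    then have tot: "(\<integral>\<^sup>+ x. ennreal (exponential_density 1 x) \<partial>lborel) = 1"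
      by (simp add: emeasure_density)
    have "(\<lambda>x. exponential_density 1 x) = (\<lambda>r::real. indicator {0..} r * exp (- r))"
      by (auto simp: fun_eq_iff exponential_density_def indicator_def)
    then show "(\<integral>\<^sup>+ x. ennreal (indicator {0..} x * exp (- x)) \<partial>lborel) = ennreal 1"
      using tot by simp
  qed auto
  have e2: "has_bochner_integral lborel (\<lambda>r::real. indicator {t<..} r * exp (- r)) (exp (- t))"
    by (rule has_bochner_integral_nn_integral) (use exp_tail[of t] t in auto)
  have "has_bochner_integral lborel (\<lambda>r. indicator {0..} r * exp (- r) - (1 - exp (- l)) * (indicator {t<..} r * exp (- r)))
      (1 - (1 - exp (- l)) * exp (- t))"
    by (intro has_bochner_integral_diff has_bochner_integral_mult_right e1 e2)
  moreover have "(\<lambda>r. indicator {0..} r * exp (- r) - (1 - exp (- l)) * (indicator {t<..} r * exp (- r)))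
      = (\<lambda>r. indicator {0..} r *\<^sub>R (exp (- (l * indicator {t<..} r)) * exp (- r)))"
    using t by (auto simp: fun_eq_iff indicator_def algebra_simps exp_add[symmetric])
  ultimately show ?thesis unfolding set_lebesgue_integral_def
    using has_bochner_integral_integral_eq by metis
qed




lemma marking_bound:
  fixes M :: "'a measure" and \<eta>0 :: "'a \<Rightarrow> (real^'d) set" and \<eta>0t :: "'a \<Rightarrow> ((real^'d) \<times> real) set"
    and N :: "'a \<Rightarrow> (real \<times> (real^'d) \<times> real \<times> real) set"
  assumes P: "prob_space M" and marks: "exp_marking eps M \<eta>0 N \<eta>0t"
    and in0: "\<And>\<omega>. \<omega> \<in> space M \<Longrightarrow> \<eta>0 \<omega> \<in> GammaG eps"
    and B: "B \<in> sets borel" "bounded B" and t: "0 < t"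
    and sp1: "space M \<in> sigma_eta0 eps M \<eta>0" and sp2: "space M \<in> sigma_N M N"
  shows "(\<lambda>\<omega>. ennreal (real (card {p\<in>\<eta>0t \<omega>. fst p \<in> B \<and> t < snd p}))) \<in> borel_measurable M"
    and "(\<integral>\<^sup>+\<omega>. ennreal (real (card {p\<in>\<eta>0t \<omega>. fst p \<in> B \<and> t < snd p})) \<partial>M)
        \<le> ennreal (exp (- t)) * (\<integral>\<^sup>+\<omega>. ennreal (real (card (\<eta>0 \<omega> \<inter> B))) \<partial>M)"
proof -
  interpret prob_space M by fact
  define K where "K \<omega> = card {p\<in>\<eta>0t \<omega>. fst p \<in> B \<and> t < snd p}" for \<omega>
  define n where "n \<omega> = card (\<eta>0 \<omega> \<inter> B)" for \<omega>
  define qf where "qf l = 1 - (1 - exp (- l)) * exp (- t)" for l :: real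
  define f where "f l = (\<lambda>(x::real^'d, r::real). l * indicator (B \<times> {t<..}) (x, r))" for l :: real
  have finB: "finite (\<eta>0 \<omega> \<inter> B)" if "\<omega> \<in> space M" for \<omega>
    using in0[OF that] B(2) unfolding GammaG_def locally_finite_conf_def by blast
  have bij: "bij_betw fst (\<eta>0t \<omega>) (\<eta>0 \<omega>)" if "\<omega> \<in> space M" for \<omega>
    using marks that unfolding exp_marking_def by blast
  have finF: "finite {p\<in>\<eta>0t \<omega>. fst p \<in> B}" if "\<omega> \<in> space M" for \<omega>
  proof (rule finite_imageD)
    show "inj_on fst {p\<in>\<eta>0t \<omega>. fst p \<in> B}" using bij[OF that] unfolding bij_betw_def
      by (rule conjE) (erule inj_on_subset, blast)
    have "fst ` {p\<in>\<eta>0t \<omega>. fst p \<in> B} \<subseteq> \<eta>0 \<omega> \<inter> B" using bij[OF that] unfolding bij_betw_def by blast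
    then show "finite (fst ` {p\<in>\<eta>0t \<omega>. fst p \<in> B})" using finB[OF that] by (rule finite_subset)
  qed
  have sumK: "(\<Sum>p\<in>{p\<in>\<eta>0t \<omega>. fst p \<in> B}. f l p) = l * real (K \<omega>)" if "\<omega> \<in> space M" for \<omega> l
  proof -
    have "(\<Sum>p\<in>{p\<in>\<eta>0t \<omega>. fst p \<in> B}. f l p) = l * (\<Sum>p\<in>{p\<in>\<eta>0t \<omega>. fst p \<in> B}. indicator (B \<times> {t<..}) p)"
      unfolding f_def by (simp add: sum_distrib_left case_prod_beta)
    also have "(\<Sum>p\<in>{p\<in>\<eta>0t \<omega>. fst p \<in> B}. indicator (B \<times> {t<..}) p) = real (card ({p\<in>\<eta>0t \<omega>. fst p \<in> B} \<inter> (B \<times> {t<..})))"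
      using sum.inter_restrict[OF finF[OF that], of "\<lambda>_. 1::real" "B \<times> {t<..}"]
      by (simp add: indicator_def of_bool_def)
    also have "{p\<in>\<eta>0t \<omega>. fst p \<in> B} \<inter> (B \<times> {t<..}) = {p\<in>\<eta>0t \<omega>. fst p \<in> B \<and> t < snd p}"
      by auto
    finally show ?thesis by (simp add: K_def)
  qed
  have prodq: "(\<Prod>x\<in>\<eta>0 \<omega> \<inter> B. LINT r:{0..}|lborel. exp (- f l (x, r)) * exp (- r)) = qf l ^ n \<omega>" for \<omega> l
  proof -
    have "(\<Prod>x\<in>\<eta>0 \<omega> \<inter> B. LINT r:{0..}|lborel. exp (- f l (x, r)) * exp (- r)) = (\<Prod>x\<in>\<eta>0 \<omega> \<inter> B. qf l)"
    proof (rule prod.cong)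
      fix x assume "x \<in> \<eta>0 \<omega> \<inter> B"
      then have "(\<lambda>r. exp (- f l (x, r)) * exp (- r)) = (\<lambda>r. exp (- (l * indicator {t<..} r)) * exp (- r))"
        by (auto simp: f_def fun_eq_iff indicator_def)
      then show "(LINT r:{0..}|lborel. exp (- f l (x, r)) * exp (- r)) = qf l"
        using qval[OF t, of l] by (simp add: qf_def)
    qed simp
    then show ?thesis by (simp add: n_def)
  qed
  have mk: "(\<lambda>\<omega>. exp (- (\<Sum>p\<in>{p\<in>\<eta>0t \<omega>. fst p \<in> B}. f l p))) \<in> borel_measurable M \<and>
      (\<lambda>\<omega>. (\<Prod>x\<in>\<eta>0 \<omega> \<inter> B. LINT r:{0..}|lborel. exp (- f l (x, r)) * exp (- r))) \<in> borel_measurable M \<and>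
      (\<integral>\<omega>. indicator (space M \<inter> space M) \<omega> * exp (- (\<Sum>p\<in>{p\<in>\<eta>0t \<omega>. fst p \<in> B}. f l p)) \<partial>M) =
      (\<integral>\<omega>. indicator (space M \<inter> space M) \<omega> *
            (\<Prod>x\<in>\<eta>0 \<omega> \<inter> B. LINT r:{0..}|lborel. exp (- f l (x, r)) * exp (- r)) \<partial>M)" if "0 \<le> l" for l
  proof -
    have "B \<times> {t<..} \<in> sets borel" using B(1) by (intro borel_Times) auto
    then have "(\<lambda>p. l * indicator (B \<times> {t<..}) p) \<in> borel_measurable borel" by measurable
    moreover have "f l = (\<lambda>p. l * indicator (B \<times> {t<..}) p)" by (auto simp: f_def fun_eq_iff)
    ultimately have "f l \<in> borel_measurable borel" by simp
    moreover have "\<forall>p. 0 \<le> f l p" using that by (auto simp: f_def)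
    moreover have "\<forall>x r. x \<notin> B \<longrightarrow> f l (x, r) = 0" by (auto simp: f_def)
    ultimately show ?thesis using marks B sp1 sp2 unfolding exp_marking_def by blast
  qed
  have Km: "(\<lambda>\<omega>. real (K \<omega>)) \<in> borel_measurable M"
  proof -
    have "(\<lambda>x::real. - ln x) \<in> borel_measurable borel" by measurable
    from measurable_compose[OF conjunct1[OF mk[of 1]] this]
    have "(\<lambda>\<omega>. - ln (exp (- (\<Sum>p\<in>{p\<in>\<eta>0t \<omega>. fst p \<in> B}. f 1 p)))) \<in> borel_measurable M"
      by simp
    then show ?thesis by (rule measurable_cong[THEN iffD1, rotated]) (simp add: sumK)
  qed
  have q1: "0 < qf l" "qf l < 1" if "0 < l" for l
  proof -
    have "exp (- l) < 1" using that by simp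
    moreover have "0 < exp (- t)" "exp (- t) < 1" using t by auto
    moreover have "0 < exp (- l)" by simp
    ultimately have a: "0 < 1 - exp (- l)" "1 - exp (- l) < 1" by auto
    have "0 < (1 - exp (- l)) * exp (- t)" using a by simp
    moreover have "(1 - exp (- l)) * exp (- t) \<le> 1 * exp (- t)"
      using a by (intro mult_right_mono) auto
    ultimately show "0 < qf l" "qf l < 1" unfolding qf_def using \<open>exp (- t) < 1\<close> by linarith+
  qed
  have nm: "(\<lambda>\<omega>. real (n \<omega>)) \<in> borel_measurable M"
  proof -
    have "(\<lambda>\<omega>. ln ((\<Prod>x\<in>\<eta>0 \<omega> \<inter> B. LINT r:{0..}|lborel. exp (- f 1 (x, r)) * exp (- r))) / ln (qf 1)) \<in> borel_measurable M"
    proof -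
      have "(\<lambda>x::real. ln x / ln (qf 1)) \<in> borel_measurable borel" by measurable
      from measurable_compose[OF conjunct1[OF conjunct2[OF mk[of 1]]] this] show ?thesis by simp
    qed
    moreover have "ln (qf 1 ^ n \<omega>) / ln (qf 1) = real (n \<omega>)" for \<omega>
      using q1[of 1] by (simp add: ln_realpow)
    ultimately show ?thesis by (simp add: prodq)
  qed
  show "(\<lambda>\<omega>. ennreal (real (card {p\<in>\<eta>0t \<omega>. fst p \<in> B \<and> t < snd p}))) \<in> borel_measurable M"
    using Km unfolding K_def by measurable
  have key: "(\<integral>\<^sup>+\<omega>. ennreal ((1 - exp (- l) ^ K \<omega>) / (1 - exp (- l))) \<partial>M)
        \<le> ennreal (exp (- t)) * (\<integral>\<^sup>+\<omega>. ennreal (real (n \<omega>)) \<partial>M)" if l: "0 < l" for l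
  proof -
    let ?p = "exp (- l)"
    have p: "0 < ?p" "?p < 1" using l by auto
    have pK: "?p ^ K \<omega> = exp (real (K \<omega>) * (- l))" for \<omega> using exp_of_nat_mult[of "K \<omega>" "- l"] by simp
    have pKm: "(\<lambda>\<omega>. ?p ^ K \<omega>) \<in> borel_measurable M" unfolding pK using Km by measurable
    have qn: "(\<lambda>\<omega>. qf l ^ n \<omega>) \<in> borel_measurable M"
      using mk[of l] l by (simp add: prodq)
    have intp: "integrable M (\<lambda>\<omega>. ?p ^ K \<omega>)"
      by (rule integrable_const_bound[where B=1]) (use p pKm in \<open>auto simp: power_le_one\<close>)
    have intq: "integrable M (\<lambda>\<omega>. qf l ^ n \<omega>)"
      by (rule integrable_const_bound[where B=1]) (use q1[OF l] qn in \<open>auto simp: power_le_one\<close>)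
    have eqI: "(\<integral>\<omega>. ?p ^ K \<omega> \<partial>M) = (\<integral>\<omega>. qf l ^ n \<omega> \<partial>M)"
    proof -
      have "(\<integral>\<omega>. ?p ^ K \<omega> \<partial>M) = (\<integral>\<omega>. indicator (space M \<inter> space M) \<omega> * exp (- (\<Sum>p\<in>{p\<in>\<eta>0t \<omega>. fst p \<in> B}. f l p)) \<partial>M)"
        by (rule Bochner_Integration.integral_cong[OF refl]) (auto simp: sumK pK mult.commute)
      also have "\<dots> = (\<integral>\<omega>. indicator (space M \<inter> space M) \<omega> *
            (\<Prod>x\<in>\<eta>0 \<omega> \<inter> B. LINT r:{0..}|lborel. exp (- f l (x, r)) * exp (- r)) \<partial>M)"
        using mk[of l] l by simp
      also have "\<dots> = (\<integral>\<omega>. qf l ^ n \<omega> \<partial>M)"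
        by (rule Bochner_Integration.integral_cong[OF refl]) (auto simp: prodq)
      finally show ?thesis .
    qed
    have "(\<integral>\<^sup>+\<omega>. ennreal ((1 - ?p ^ K \<omega>) / (1 - ?p)) \<partial>M) = ennreal (\<integral>\<omega>. (1 - ?p ^ K \<omega>) / (1 - ?p) \<partial>M)"
      by (rule nn_integral_eq_integral) (use intp p in \<open>auto simp: power_le_one\<close>)
    also have "(\<integral>\<omega>. (1 - ?p ^ K \<omega>) / (1 - ?p) \<partial>M) = (1 - (\<integral>\<omega>. ?p ^ K \<omega> \<partial>M)) / (1 - ?p)"
      using intp by (simp add: prob_space)
    also have "\<dots> = (1 - (\<integral>\<omega>. qf l ^ n \<omega> \<partial>M)) / (1 - ?p)" by (simp add: eqI)
    also have "\<dots> = (\<integral>\<omega>. (1 - qf l ^ n \<omega>) / (1 - ?p) \<partial>M)"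
      using intq by (simp add: prob_space)
    also have "ennreal \<dots> = (\<integral>\<^sup>+\<omega>. ennreal ((1 - qf l ^ n \<omega>) / (1 - ?p)) \<partial>M)"
      by (rule nn_integral_eq_integral[symmetric]) (use intq p q1[OF l] in \<open>auto simp: power_le_one\<close>)
    also have "\<dots> \<le> (\<integral>\<^sup>+\<omega>. ennreal (exp (- t)) * ennreal (real (n \<omega>)) \<partial>M)"
    proof (rule nn_integral_mono)
      fix \<omega>
      have "1 + real (n \<omega>) * (qf l - 1) \<le> (1 + (qf l - 1)) ^ n \<omega>"
        by (rule Bernoulli_inequality) (use q1[OF l] in auto)
      then have "1 - qf l ^ n \<omega> \<le> real (n \<omega>) * ((1 - ?p) * exp (- t))" by (simp add: qf_def algebra_simps)
      then have "(1 - qf l ^ n \<omega>) / (1 - ?p) \<le> exp (- t) * real (n \<omega>)"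
        using p by (simp add: divide_le_eq algebra_simps)
      then show "ennreal ((1 - qf l ^ n \<omega>) / (1 - ?p)) \<le> ennreal (exp (- t)) * ennreal (real (n \<omega>))"
        by (simp add: ennreal_mult'[symmetric] ennreal_leI)
    qed
    also have "\<dots> = ennreal (exp (- t)) * (\<integral>\<^sup>+\<omega>. ennreal (real (n \<omega>)) \<partial>M)"
      by (rule nn_integral_cmult) (use nm in measurable)
    finally show ?thesis .
  qed
  define lm where "lm m = 1 / real (Suc m)" for m
  define Gm where "Gm m \<omega> = ennreal (\<Sum>j<K \<omega>. exp (- lm m) ^ j)" for m \<omega>
  have lmpos: "0 < lm m" for m by (simp add: lm_def)
  have Geq: "Gm m \<omega> = ennreal ((1 - exp (- lm m) ^ K \<omega>) / (1 - exp (- lm m)))" for m \<omega>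
  proof -
    have "exp (- lm m) \<noteq> 1" using lmpos[of m] by simp
    then show ?thesis unfolding Gm_def by (simp add: sum_gp_strict)
  qed
  have Gmeas: "Gm m \<in> borel_measurable M" for m
  proof -
    have "(\<lambda>\<omega>. ennreal ((1 - exp (real (K \<omega>) * (- lm m))) / (1 - exp (- lm m)))) \<in> borel_measurable M"
      using Km by measurable
    moreover have "exp (real (K \<omega>) * (- lm m)) = exp (- lm m) ^ K \<omega>" for \<omega>
      by (rule exp_of_nat_mult)
    ultimately show ?thesis by (simp add: Geq[abs_def])
  qed
  have inc: "incseq Gm"
  proof (rule incseq_SucI, rule le_funI)
    fix m \<omega>
    have "exp (- lm m) \<le> exp (- lm (Suc m))" by (simp add: lm_def frac_le)
    then show "Gm m \<omega> \<le> Gm (Suc m) \<omega>" unfolding Gm_def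
      by (intro ennreal_leI sum_mono power_mono) auto
  qed
  have lim: "(\<lambda>m. Gm m \<omega>) \<longlonglongrightarrow> ennreal (real (K \<omega>))" for \<omega>
  proof -
    have "(\<lambda>m. lm m) \<longlonglongrightarrow> 0" unfolding lm_def using LIMSEQ_inverse_real_of_nat by (simp add: inverse_eq_divide)
    then have "(\<lambda>m. exp (- lm m)) \<longlonglongrightarrow> exp (- 0)" by (intro tendsto_intros)
    then have "(\<lambda>m. \<Sum>j<K \<omega>. exp (- lm m) ^ j) \<longlonglongrightarrow> (\<Sum>j<K \<omega>. 1 ^ j)" by (intro tendsto_intros) simp
    then show ?thesis unfolding Gm_def by (intro tendsto_ennrealI) simp
  qed
  have sup: "(SUP m. Gm m \<omega>) = ennreal (real (K \<omega>))" for \<omega>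
  proof -
    have "incseq (\<lambda>m. Gm m \<omega>)" using inc by (auto simp: incseq_def le_fun_def)
    from LIMSEQ_SUP[OF this] lim[of \<omega>] show ?thesis by (rule LIMSEQ_unique)
  qed
  have "(\<integral>\<^sup>+\<omega>. ennreal (real (K \<omega>)) \<partial>M) = (\<integral>\<^sup>+\<omega>. (SUP m. Gm m \<omega>) \<partial>M)" by (simp add: sup)
  also have "\<dots> = (SUP m. \<integral>\<^sup>+\<omega>. Gm m \<omega> \<partial>M)"
    by (rule nn_integral_monotone_convergence_SUP[OF inc Gmeas])
  also have "\<dots> \<le> ennreal (exp (- t)) * (\<integral>\<^sup>+\<omega>. ennreal (real (n \<omega>)) \<partial>M)"
    by (rule SUP_least) (simp add: Geq key[OF lmpos])
  finally show "(\<integral>\<^sup>+\<omega>. ennreal (real (card {p\<in>\<eta>0t \<omega>. fst p \<in> B \<and> t < snd p})) \<partial>M)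
        \<le> ennreal (exp (- t)) * (\<integral>\<^sup>+\<omega>. ennreal (real (card (\<eta>0 \<omega> \<inter> B))) \<partial>M)"
    by (simp add: K_def n_def)
qed




lemma pointwise_count:
  assumes fE: "finite (Et \<inter> B)" and fN: "finite (Nw \<inter> A)" and sub: "Nw \<inter> A' \<subseteq> Nw \<inter> A"
    and eq: "pcount Et B = pcount Nw A' + pcount T C'"
  shows "real (card (Et \<inter> B)) \<le> real (card (Nw \<inter> A)) + real (card (T \<inter> C'))"
proof -
  have fA': "finite (Nw \<inter> A')" using fN sub by (rule finite_subset[rotated])
  have fT: "finite (T \<inter> C')"
  proof (rule ccontr)
    assume "\<not> finite (T \<inter> C')"
    then have "pcount Et B = \<infinity>" using eq by (simp add: pcount_def)
    with fE show False by (simp add: pcount_def)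
  qed
  from eq fE fA' fT have "card (Et \<inter> B) = card (Nw \<inter> A') + card (T \<inter> C')"
    by (simp add: pcount_def)
  moreover have "card (Nw \<inter> A') \<le> card (Nw \<inter> A)" using fN sub by (rule card_mono)
  ultimately show ?thesis by simp
qed

theorem corollary4p4:
  fixes eps :: real
    and M :: "'a measure" and F :: "real \<Rightarrow> 'a measure"
    and N :: "'a \<Rightarrow> (real \<times> (real^'d) \<times> real \<times> real) set"
    and \<eta>0 :: "'a \<Rightarrow> (real^'d) set" and \<eta>0t :: "'a \<Rightarrow> ((real^'d) \<times> real) set"
    and b :: "(real^'d) \<Rightarrow> (real^'d) set \<Rightarrow> real"
    and \<eta> :: "real \<Rightarrow> 'a \<Rightarrow> (real^'d) set"
    and Mc C0 :: real
  assumes eps_pos: "0 < eps"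
    and prob: "prob_space M"
    and filt: "is_filtration M F"
    and pois: "poisson_pp M mean_measure N"
    and compat: "compatible M F N"
    and eta0_meas: "\<eta>0 \<in> measurable (F 0) (GBorel eps)"
    and eta0_indep: "prob_space.indep_set M (sigma_eta0 eps M \<eta>0) (sigma_N M N)"
    and marks: "exp_marking eps M \<eta>0 N \<eta>0t"
    and b_meas: "(\<lambda>(x, \<gamma>). b x \<gamma>) \<in> borel_measurable (borel \<Otimes>\<^sub>M GBorel eps)"
    and b_nonneg: "\<forall>x. \<forall>\<gamma>\<in>GammaG eps. 0 \<le> b x \<gamma>"
    and b_bdd: "bdd_above {b x \<gamma> | x \<gamma>. \<gamma> \<in> GammaG eps}"
    and Mc_pos: "0 < Mc"
    and b_lip: "\<forall>x y. \<forall>\<gamma>\<in>GammaG eps. \<bar>b x (\<gamma> \<union> {y}) - b x \<gamma>\<bar> \<le> Mc * G eps (x - y)"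
    and sol: "is_solution eps M F N \<eta>0t b \<eta>"
    and C0_pos: "0 < C0"
    and init: "\<forall>B. B \<in> sets borel \<and> bounded B \<longrightarrow>
               (\<integral>\<^sup>+\<omega>. ennreal (card (\<eta>0 \<omega> \<inter> B)) \<partial>M) \<le> ennreal C0 * emeasure lborel B"
  shows "0 < max (Sup {b x \<gamma> | x \<gamma>. \<gamma> \<in> GammaG eps}) C0 \<and>
         (\<forall>t>0. \<forall>B. B \<in> sets borel \<and> bounded B \<longrightarrow>
            (\<integral>\<^sup>+\<omega>. ennreal (card (\<eta> t \<omega> \<inter> B)) \<partial>M)
              \<le> ennreal (max (Sup {b x \<gamma> | x \<gamma>. \<gamma> \<in> GammaG eps}) C0) * emeasure lborel B)"
proof -
  interpret prob_space M by (rule prob)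
  define bb where "bb = Sup {b x \<gamma> | x \<gamma>. \<gamma> \<in> GammaG eps}"
  define C where "C = max bb C0"
  have emptyG: "{} \<in> GammaG eps"
    by (simp add: GammaG_def locally_finite_conf_def)
  have b_le: "b x \<gamma> \<le> bb" if "\<gamma> \<in> GammaG eps" for x \<gamma>
    unfolding bb_def by (rule cSup_upper) (use that b_bdd in auto)
  have bb0: "0 \<le> bb" using b_le[OF emptyG] b_nonneg emptyG by (meson order_trans)
  have C_pos: "0 < C" using C0_pos by (simp add: C_def)
  have spG: "space (GBorel eps) = GammaG eps"
    unfolding GBorel_def by (rule space_measure_of) (auto simp: G_open_def)
  have sub: "subalgebra M (F 0)" using filt unfolding is_filtration_def by simp
  have in0: "\<eta>0 \<omega> \<in> GammaG eps" if "\<omega> \<in> space M" for \<omega>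
  proof -
    have "space (F 0) = space M" using sub unfolding subalgebra_def by simp
    then have "\<eta>0 \<omega> \<in> space (GBorel eps)" using measurable_space[OF eta0_meas] that by simp
    then show ?thesis by (simp add: spG)
  qed
  have sp1: "space M \<in> sigma_eta0 eps M \<eta>0"
  proof -
    have "GammaG eps \<in> sets (GBorel eps)"
      using sets.top[of "GBorel eps"] by (simp add: spG)
    moreover have "\<eta>0 -` GammaG eps \<inter> space M = space M" using in0 by auto
    ultimately show ?thesis unfolding sigma_eta0_def by blast
  qed
  have sp2: "space M \<in> sigma_N M N"
    unfolding sigma_N_def using sets.top[of "sigma (space M) {{\<omega>\<in>space M. pcount (N \<omega>) A = k} | A k. A \<in> sets (borel :: (real \<times> (real^'d) \<times> real \<times> real) measure)}"]
    by simp
  have main: "(\<integral>\<^sup>+\<omega>. ennreal (card (\<eta> t \<omega> \<inter> B)) \<partial>M) \<le> ennreal C * emeasure lborel B"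
    if t: "0 < t" and B: "B \<in> sets borel" "bounded B" for t B
  proof -
    define A where "A \<equiv> {(s,x,u,r). 0 < s \<and> s \<le> t \<and> x \<in> B \<and> 0 \<le> u \<and> u \<le> bb \<and> t - s < r}"
    have Aset: "A \<in> sets (mean_measure :: (real \<times> (real^'d) \<times> real \<times> real) measure)"
      and Ameas: "emeasure (mean_measure :: (real \<times> (real^'d) \<times> real \<times> real) measure) A
          \<le> ennreal (bb * (1 - exp (-t))) * emeasure lborel B"
      unfolding A_def by (rule mean_bound(1)[OF B(1) t bb0], rule mean_bound(2)[OF B(1) t bb0])
    have volfin: "emeasure lborel B = ennreal (measure lborel B)"
      using emeasure_bounded_finite[OF B(2)] by (simp add: emeasure_eq_ennreal_measure)
    have Afin: "emeasure (mean_measure :: (real \<times> (real^'d) \<times> real \<times> real) measure) A < \<infinity>"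
    proof -
      have "0 \<le> bb * (1 - exp (-t))" using bb0 t by simp
      then have "ennreal (bb * (1 - exp (-t))) * emeasure lborel B = ennreal (bb * (1 - exp (-t)) * measure lborel B)"
        by (simp add: volfin ennreal_mult)
      then show ?thesis using le_less_trans[OF Ameas, of \<infinity>] by simp
    qed
    have Aem: "emeasure (mean_measure :: (real \<times> (real^'d) \<times> real \<times> real) measure) A
        = ennreal (measure (mean_measure :: (real \<times> (real^'d) \<times> real \<times> real) measure) A)"
      by (rule emeasure_eq_ennreal_measure) (use Afin in simp)
    from pois Aset Afin have
      Xm: "(\<lambda>\<omega>. card (N \<omega> \<inter> A)) \<in> measurable M (count_space UNIV)" and
      Xfin: "AE \<omega> in M. finite (N \<omega> \<inter> A)" and
      Xd: "\<And>k. measure M {\<omega>\<in>space M. card (N \<omega> \<inter> A) = k} =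
              measure mean_measure A ^ k / fact k * exp (- measure mean_measure A)"
      unfolding poisson_pp_def by blast+
    have EX: "(\<integral>\<^sup>+\<omega>. ennreal (real (card (N \<omega> \<inter> A))) \<partial>M) = ennreal (measure mean_measure A)"
      by (rule poisson_mean[OF prob Xm _ Xd]) simp
    have Xmeas: "(\<lambda>\<omega>. ennreal (real (card (N \<omega> \<inter> A)))) \<in> borel_measurable M"
      using measurable_compose[OF Xm, of "\<lambda>k. ennreal (real k)" borel] by simp
    note MB = marking_bound[OF prob marks in0 B t sp1 sp2]
    have initB: "(\<integral>\<^sup>+\<omega>. ennreal (card (\<eta>0 \<omega> \<inter> B)) \<partial>M) \<le> ennreal C0 * emeasure lborel B"
      using init B by blast
    have AEpt: "AE \<omega> in M. ennreal (card (\<eta> t \<omega> \<inter> B)) \<le>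
        ennreal (real (card (N \<omega> \<inter> A))) + ennreal (real (card {p\<in>\<eta>0t \<omega>. fst p \<in> B \<and> t < snd p}))"
    proof -
      have "AE \<omega> in M. pcount (\<eta> t \<omega>) B =
          pcount (N \<omega>) {(s, x, u, r). 0 < s \<and> s \<le> t \<and> x \<in> B \<and>
                0 \<le> u \<and> u \<le> b x (left_lim eps (\<lambda>s'. \<eta> s' \<omega>) s) \<and> t - s < r}
        + pcount (\<eta>0t \<omega>) {(x, r). x \<in> B \<and> t < r}"
      proof -
        have "\<forall>B t. B \<in> sets borel \<and> bounded B \<and> 0 \<le> t \<longrightarrow>
          (AE \<omega> in M. pcount (\<eta> t \<omega>) B =
          pcount (N \<omega>) {(s, x, u, r). 0 < s \<and> s \<le> t \<and> x \<in> B \<and>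
                0 \<le> u \<and> u \<le> b x (left_lim eps (\<lambda>s'. \<eta> s' \<omega>) s) \<and> t - s < r}
        + pcount (\<eta>0t \<omega>) {(x, r). x \<in> B \<and> t < r})"
          using sol unfolding is_solution_def by (elim conjE)
        then show ?thesis using B t by simp
      qed
      with Xfin AE_space show ?thesis
      proof (eventually_elim)
        case (elim \<omega>)
        have fN: "finite (N \<omega> \<inter> A)" and om: "\<omega> \<in> space M" using elim by auto
        have cad: "cadlag eps (\<lambda>t. \<eta> t \<omega>)" using sol om unfolding is_solution_def by blast
        have "\<eta> t \<omega> \<in> GammaG eps" using cad t unfolding cadlag_def by simp
        then have fE: "finite (\<eta> t \<omega> \<inter> B)" using B(2) unfolding GammaG_def locally_finite_conf_def by blast
        have sub: "N \<omega> \<inter> {(s, x, u, r). 0 < s \<and> s \<le> t \<and> x \<in> B \<and>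
                0 \<le> u \<and> u \<le> b x (left_lim eps (\<lambda>s'. \<eta> s' \<omega>) s) \<and> t - s < r} \<subseteq> N \<omega> \<inter> A"
        proof (clarsimp simp: A_def)
          fix s x u r assume "0 < s" "u \<le> b x (left_lim eps (\<lambda>s'. \<eta> s' \<omega>) s)"
          moreover have "b x (left_lim eps (\<lambda>s'. \<eta> s' \<omega>) s) \<le> bb"
            by (rule b_le[OF left_lim_in[OF eps_pos cad \<open>0 < s\<close>]])
          ultimately show "u \<le> bb" by linarith
        qed
        have "real (card (\<eta> t \<omega> \<inter> B)) \<le> real (card (N \<omega> \<inter> A)) + real (card (\<eta>0t \<omega> \<inter> {(x, r). x \<in> B \<and> t < r}))"
          by (rule pointwise_count[OF fE fN sub]) (use elim in simp)
        moreover have "\<eta>0t \<omega> \<inter> {(x, r). x \<in> B \<and> t < r} = {p\<in>\<eta>0t \<omega>. fst p \<in> B \<and> t < snd p}" by auto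
        ultimately have "real (card (\<eta> t \<omega> \<inter> B)) \<le> real (card (N \<omega> \<inter> A)) + real (card {p\<in>\<eta>0t \<omega>. fst p \<in> B \<and> t < snd p})"
          by simp
        then show ?case by (simp add: ennreal_plus[symmetric] ennreal_leI del: ennreal_plus)
      qed
    qed
    define v where "v = measure lborel B"
    define e where "e = exp (- t)"
    have v0: "0 \<le> v" by (simp add: v_def)
    have e0: "0 < e" "e \<le> 1" using t by (auto simp: e_def)
    have "(\<integral>\<^sup>+\<omega>. ennreal (card (\<eta> t \<omega> \<inter> B)) \<partial>M) \<le>
        (\<integral>\<^sup>+\<omega>. ennreal (real (card (N \<omega> \<inter> A))) + ennreal (real (card {p\<in>\<eta>0t \<omega>. fst p \<in> B \<and> t < snd p})) \<partial>M)"
      by (rule nn_integral_mono_AE[OF AEpt])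
    also have "\<dots> = (\<integral>\<^sup>+\<omega>. ennreal (real (card (N \<omega> \<inter> A))) \<partial>M) +
        (\<integral>\<^sup>+\<omega>. ennreal (real (card {p\<in>\<eta>0t \<omega>. fst p \<in> B \<and> t < snd p})) \<partial>M)"
      by (rule nn_integral_add[OF Xmeas MB(1)])
    also have "\<dots> \<le> ennreal (bb * (1 - e)) * ennreal v + ennreal e * (ennreal C0 * ennreal v)"
    proof (rule add_mono)
      show "(\<integral>\<^sup>+\<omega>. ennreal (real (card (N \<omega> \<inter> A))) \<partial>M) \<le> ennreal (bb * (1 - e)) * ennreal v"
        using EX Aem Ameas volfin by (simp add: e_def v_def)
      have "(\<integral>\<^sup>+\<omega>. ennreal (real (card {p\<in>\<eta>0t \<omega>. fst p \<in> B \<and> t < snd p})) \<partial>M)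
          \<le> ennreal e * (\<integral>\<^sup>+\<omega>. ennreal (real (card (\<eta>0 \<omega> \<inter> B))) \<partial>M)"
        using MB(2) by (simp add: e_def)
      also have "\<dots> \<le> ennreal e * (ennreal C0 * ennreal v)"
        using initB volfin by (intro mult_left_mono) (auto simp: v_def)
      finally show "(\<integral>\<^sup>+\<omega>. ennreal (real (card {p\<in>\<eta>0t \<omega>. fst p \<in> B \<and> t < snd p})) \<partial>M)
          \<le> ennreal e * (ennreal C0 * ennreal v)" .
    qed
    also have "\<dots> = ennreal (bb * (1 - e) * v + e * (C0 * v))"
      using bb0 e0 v0 C0_pos by (simp add: ennreal_mult ennreal_plus)
    also have "\<dots> \<le> ennreal (C * v)"
    proof (rule ennreal_leI)
      have "bb * (1 - e) * v \<le> C * (1 - e) * v"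
        using e0 v0 by (intro mult_right_mono) (auto simp: C_def)
      moreover have "e * (C0 * v) \<le> e * (C * v)"
        using e0 v0 by (intro mult_left_mono mult_right_mono) (auto simp: C_def)
      ultimately show "bb * (1 - e) * v + e * (C0 * v) \<le> C * v" by (simp add: algebra_simps)
    qed
    also have "\<dots> = ennreal C * emeasure lborel B"
      using C_pos v0 by (simp add: volfin v_def ennreal_mult)
    finally show ?thesis .
  qed
  show ?thesis using C_pos main unfolding C_def bb_def by blast
qed


end
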